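(* Let $p>q>1$ be relatively prime integers. If a sequence is $\frac{p}{q}$-automatic, then it is the image under a coding of a fixed point of a $q$-block substitution all of whose images have length $p$.
   Context: Let $A_p=\{0,1,\ldots,p-1\}$. For a word $w=w_\ell\cdots w_0\in A_p^*$, $\mathrm{val}_{\frac pq}(w)=\sum_{i=0}^{\ell}\frac{w_i}{q}\left(\frac pq\right)^i$. Every integer $n\ge 0$ has a unique representation $\mathrm{rep}_{\frac pq}(n)\in A_p^*$ not starting with $0$ such that $\mathrm{val}_{\frac pq}(\mathrm{rep}_{\frac pq}(n))=n$, with $\mathrm{rep}_{\frac pq}(0)=\varepsilon$. A sequence $\mathbf{x}$ over a finite alphabet $B$ is $\frac pq$-automatic if there is a deterministic finite automaton with output $(Q,q_0,A_p,\delta,\tau:Q\to B)$ with $x_n=\tau(\delta(q_0,\mathrm{rep}_{\frac pq}(n)))$ for all $n\ge0$. A coding is a letter-to-letter map. A $q$-block substitution is a map $g:C^q\to C^*$ acting on words by $g(w_0\cdots w_{q-1})g(w_q\cdots w_{2q-1})\cdots$; an infinite word $\mathbf{w}=w_0w_1\cdots$ is a fixed point of $g$ if $\mathbf{w}=g(w_0\cdots w_{q-1})g(w_q\cdots w_{2q-1})\cdots$. "All images have length $p$" means $|g(u)|=p$ for every $u\in C^q$. *)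

theory Defs
  imports Complex_Main
begin

text \<open>Words w = w_l ... w_0 are lists with the most significant digit (w_l) first.\<close>

definition val_pq :: "nat \<Rightarrow> nat \<Rightarrow> nat list \<Rightarrow> real" where
  "val_pq p q w = (\<Sum>i<length w. real (rev w ! i) / real q * (real p / real q) ^ i)"

definition rep_pq :: "nat \<Rightarrow> nat \<Rightarrow> nat \<Rightarrow> nat list" where
  "rep_pq p q n = (THE w. set w \<subseteq> {0..<p} \<and> (w = [] \<or> hd w \<noteq> 0) \<and> val_pq p q w = real n)"

definition pq_automatic :: "nat \<Rightarrow> nat \<Rightarrow> (nat \<Rightarrow> 'b) \<Rightarrow> bool" where
  "pq_automatic p q x \<longleftrightarrow>
     (\<exists>(Q::nat set) q0 (\<delta>::nat \<Rightarrow> nat \<Rightarrow> nat) (\<tau>::nat \<Rightarrow> 'b).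
        finite Q \<and> q0 \<in> Q \<and> (\<forall>s\<in>Q. \<forall>a<p. \<delta> s a \<in> Q) \<and>
        (\<forall>n. x n = \<tau> (foldl \<delta> q0 (rep_pq p q n))))"

definition block :: "nat \<Rightarrow> (nat \<Rightarrow> 'a) \<Rightarrow> nat \<Rightarrow> 'a list" where
  "block q w k = map w [k*q..<k*q+q]"

text \<open>w is a fixed point of the q-block substitution g:
  w = g(w_0..w_{q-1}) g(w_q..w_{2q-1}) ... (an infinite word).\<close>
definition block_fixed_point :: "nat \<Rightarrow> ('a list \<Rightarrow> 'a list) \<Rightarrow> (nat \<Rightarrow> 'a) \<Rightarrow> bool" where
  "block_fixed_point q g w \<longleftrightarrow>
     (\<forall>k. let u = concat (map (\<lambda>j. g (block q w j)) [0..<k]) in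
            \<forall>i<length u. w i = u ! i) \<and>
     (\<forall>N. \<exists>k. N \<le> length (concat (map (\<lambda>j. g (block q w j)) [0..<k])))"

end

theory Submission imports Defs begin

lemma val_nil: "val_pq p q [] = 0" by (simp add: val_pq_def)

lemma val_snoc: "val_pq p q (v @ [a]) = (real a + real p * val_pq p q v) / real q"
proof -
  have "val_pq p q (v @ [a]) = (\<Sum>i<Suc (length v). real ((a # rev v) ! i) / real q * (real p / real q) ^ i)"
    by (simp add: val_pq_def)
  also have "\<dots> = real a / real q + (\<Sum>i<length v. real (rev v ! i) / real q * (real p / real q) ^ Suc i)"
    by (subst sum.lessThan_Suc_shift) simp
  also have "(\<Sum>i<length v. real (rev v ! i) / real q * (real p / real q) ^ Suc i) = (real p / real q) * val_pq p q v"
    by (simp add: val_pq_def sum_distrib_left algebra_simps)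
  finally show ?thesis by (simp add: add_divide_distrib)
qed

lemma val_nonneg: "val_pq p q w \<ge> 0"
  by (simp add: val_pq_def sum_nonneg)

lemma val_int: "\<exists>K::nat. real q ^ length v * val_pq p q v = real K"
proof (induction v rule: rev_induct)
  case Nil then show ?case by (simp add: val_nil)
next
  case (snoc a v)
  then obtain K where K: "real q ^ length v * val_pq p q v = real K" by blast
  show ?case
  proof (cases "q = 0")
    case True then show ?thesis by (simp add: val_snoc)
  next
    case False
    have "real q ^ length (v @ [a]) * val_pq p q (v @ [a]) = real q ^ length v * (real a + real p * val_pq p q v)"
      using False by (simp add: val_snoc)
    also have "\<dots> = real (q ^ length v * a + p * K)" using K by (simp add: algebra_simps)
    finally show ?thesis by blast
  qed
qed

definition valid :: "nat \<Rightarrow> nat list \<Rightarrow> bool" where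
  "valid p w \<longleftrightarrow> set w \<subseteq> {0..<p} \<and> (w = [] \<or> hd w \<noteq> 0)"

context
  fixes p q :: nat
  assumes q1: "q > 1" and pq: "p > q" and cop: "coprime p q"
begin

lemma intval:
  assumes "val_pq p q (v @ [a]) = real n" "a < p"
  shows "val_pq p q v = real (q*n div p) \<and> a = q*n mod p"
proof -
  obtain K where K: "real q ^ length v * val_pq p q v = real K" using val_int by blast
  have e: "real a + real p * val_pq p q v = real q * real n"
    using assms(1) q1 by (simp add: val_snoc field_simps)
  have qs: "real q ^ length v > 0" using q1 by simp
  have "real p * real K = real q ^ length v * (real p * val_pq p q v)" by (simp add: K[symmetric] algebra_simps)
  also have "real p * val_pq p q v = real q * real n - real a" using e by simp
  finally have "real p * real K = real q ^ length v * (real q * real n - real a)" .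
  moreover have "a \<le> q * n"
  proof -
    have "real a \<le> real q * real n" using e val_nonneg[of p q v] by (smt (verit) mult_nonneg_nonneg of_nat_0_le_iff)
    then show ?thesis by (simp flip: of_nat_mult)
  qed
  ultimately have "real (p * K) = real (q ^ length v * (q * n - a))"
    by (simp add: of_nat_diff)
  hence "p * K = q ^ length v * (q * n - a)" by linarith
  hence "q ^ length v dvd p * K" by simp
  moreover have "coprime (q ^ length v) p" using cop by (simp add: coprime_commute)
  ultimately have "q ^ length v dvd K" using coprime_dvd_mult_right_iff by blast
  then obtain t where t: "K = q ^ length v * t" by blast
  have vt: "val_pq p q v = real t" using K t qs q1 by auto
  have "real (p * t + a) = real (q * n)" using e vt by simp
  hence pt: "p * t + a = q * n" by linarith
  have "q*n div p = t" using pt assms(2) by (metis add.commute div_mult_self3 div_less add_0 less_nat_zero_code not_less0 pq gr_implies_not0 mult.commute neq0_conv)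
  moreover have "q*n mod p = a" using pt assms(2) by (metis mod_mult_self2 mod_less add.commute mult.commute)
  ultimately show ?thesis using vt by simp
qed

lemma valid_butlast: "valid p (v @ [a]) \<Longrightarrow> valid p v"
  by (cases v) (auto simp: valid_def)

lemma val_zero: "valid p w \<Longrightarrow> val_pq p q w = 0 \<Longrightarrow> w = []"
proof (induction w rule: rev_induct)
  case Nil then show ?case by simp
next
  case (snoc a v)
  have a: "a < p" using snoc.prems by (auto simp: valid_def)
  from intval[OF _ a, where n=0] snoc.prems have "val_pq p q v = 0" "a = 0" by auto
  with snoc valid_butlast have "v = []" by blast
  with snoc.prems \<open>a = 0\<close> show ?case by (simp add: valid_def)
qed

lemma uniq: "valid p w \<Longrightarrow> val_pq p q w = real n \<Longrightarrow> valid p w' \<Longrightarrow> val_pq p q w' = real n \<Longrightarrow> w = w'"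
proof (induction w arbitrary: w' n rule: rev_induct)
  case Nil
  then have "val_pq p q w' = 0" by (simp add: val_nil)
  with Nil val_zero show ?case by metis
next
  case (snoc a v)
  show ?case
  proof (cases w' rule: rev_exhaust)
    case Nil
    with snoc.prems have "val_pq p q (v @ [a]) = 0" by (simp add: val_nil)
    with snoc.prems(1) val_zero have False by blast
    then show ?thesis ..
  next
    case (snoc v' a')
    have a: "a < p" using snoc.prems by (auto simp: valid_def)
    have a': "a' < p" using snoc.prems snoc by (auto simp: valid_def)
    from intval[OF _ a] snoc.prems have 1: "val_pq p q v = real (q*n div p)" "a = q*n mod p" by auto
    from intval[OF _ a'] snoc.prems snoc have 2: "val_pq p q v' = real (q*n div p)" "a' = q*n mod p" by auto
    have "v = v'" using snoc.IH[OF valid_butlast[OF snoc.prems(1)] 1(1) _ 2(1)] snoc.prems(3) snoc valid_butlast by blast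
    then show ?thesis using 1 2 snoc by simp
  qed
qed

lemma exist: "\<exists>w. valid p w \<and> val_pq p q w = real n"
proof (induction n rule: less_induct)
  case (less n)
  show ?case
  proof (cases "n = 0")
    case True then show ?thesis by (auto simp: valid_def val_nil intro: exI[of _ "[]"])
  next
    case False
    define m where "m = q*n div p"
    define a where "a = q*n mod p"
    have "q * n < p * n" using False pq by simp
    hence "m < n" unfolding m_def by (simp add: div_less_iff_less_mult mult.commute)
    then obtain v where v: "valid p v" "val_pq p q v = real m" using less by blast
    have p0: "p > 0" using pq by simp
    have ap: "a < p" using p0 unfolding a_def by simp
    have qn: "p * m + a = q * n" unfolding m_def a_def by simp
    have val: "val_pq p q (v @ [a]) = real n"
      using q1 qn v(2) by (simp add: val_snoc field_simps flip: of_nat_mult of_nat_add)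
    have "valid p (v @ [a])"
    proof (cases "v = []")
      case True
      then have "m = 0" using v(2) by (simp add: val_nil)
      then have "a = q * n" using qn by simp
      then have "a \<noteq> 0" using False q1 by simp
      then show ?thesis using True ap by (simp add: valid_def)
    next
      case False
      then show ?thesis using v(1) ap by (auto simp: valid_def)
    qed
    then show ?thesis using val by blast
  qed
qed

lemma rep_props: "valid p (rep_pq p q n) \<and> val_pq p q (rep_pq p q n) = real n"
proof -
  have "\<exists>!w. valid p w \<and> val_pq p q w = real n" using exist uniq by blast
  from theI'[OF this] show ?thesis unfolding rep_pq_def valid_def by simp
qed

lemma rep_eq: "valid p w \<Longrightarrow> val_pq p q w = real n \<Longrightarrow> rep_pq p q n = w"
  using rep_props uniq by blast

lemma rep0: "rep_pq p q 0 = []"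
  by (rule rep_eq) (auto simp: valid_def val_nil)

lemma rep_step:
  assumes "n > 0"
  shows "rep_pq p q n = rep_pq p q (q*n div p) @ [q*n mod p]"
proof (rule rep_eq)
  define m where "m = q*n div p"
  define a where "a = q*n mod p"
  have p0: "p > 0" using pq by simp
  have ap: "a < p" using p0 unfolding a_def by simp
  have qn: "p * m + a = q * n" unfolding m_def a_def by simp
  have v: "valid p (rep_pq p q m)" "val_pq p q (rep_pq p q m) = real m" using rep_props by auto
  show "val_pq p q (rep_pq p q (q*n div p) @ [q*n mod p]) = real n"
    using q1 qn v(2) unfolding m_def[symmetric] a_def[symmetric] by (simp add: val_snoc field_simps flip: of_nat_mult of_nat_add)
  show "valid p (rep_pq p q (q*n div p) @ [q*n mod p])"
    unfolding m_def[symmetric] a_def[symmetric]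
  proof (cases "rep_pq p q m = []")
    case True
    then have "m = 0" using v(2) by (simp add: val_nil)
    then have "a = q * n" using qn by simp
    then have "a \<noteq> 0" using assms q1 by simp
    then show "valid p (rep_pq p q m @ [a])" using True ap by (simp add: valid_def)
  next
    case False
    then show "valid p (rep_pq p q m @ [a])" using v(1) ap by (auto simp: valid_def)
  qed
qed

end

lemma concat_nth:
  assumes "\<And>j. j < k \<Longrightarrow> length (f j) = p"
  shows "length (concat (map f [0..<k])) = k * p \<and>
         (\<forall>i < k * p. concat (map f [0..<k]) ! i = f (i div p) ! (i mod p))"
  using assms
proof (induction k)
  case 0 then show ?case by simp
next
  case (Suc k)
  have IH: "length (concat (map f [0..<k])) = k * p \<and>
         (\<forall>i < k * p. concat (map f [0..<k]) ! i = f (i div p) ! (i mod p))" using Suc by simp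
  have lk: "length (f k) = p" using Suc.prems by simp
  show ?case
  proof (intro conjI allI impI)
    show "length (concat (map f [0..<Suc k])) = Suc k * p" using IH lk by simp
  next
    fix i assume i: "i < Suc k * p"
    show "concat (map f [0..<Suc k]) ! i = f (i div p) ! (i mod p)"
    proof (cases "i < k * p")
      case True then show ?thesis using IH by (simp add: nth_append)
    next
      case False
      then have "i div p = k" using i by (simp add: div_nat_eqI mult.commute)
      moreover have "i - k * p = i mod p" using False by (metis calculation minus_div_mult_eq_mod mult.commute)
      ultimately show ?thesis using IH False by (simp add: nth_append)
    qed
  qed
qed

lemma foldl_closed: "set ws \<subseteq> {0..<p} \<Longrightarrow> s \<in> Q \<Longrightarrow> (\<forall>s\<in>Q. \<forall>a<p. \<delta> s a \<in> Q) \<Longrightarrow> foldl \<delta> s ws \<in> Q"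
  by (induction ws arbitrary: s) auto

theorem mainTheorem6:
  fixes p q :: nat and x :: "nat \<Rightarrow> 'b"
  assumes "q > 1" and "p > q" and "coprime p q"
    and "pq_automatic p q x"
  shows "\<exists>(C::nat set) (g::nat list \<Rightarrow> nat list) (w::nat \<Rightarrow> nat) (c::nat \<Rightarrow> 'b).
           finite C \<and>
           (\<forall>u. set u \<subseteq> C \<and> length u = q \<longrightarrow> set (g u) \<subseteq> C \<and> length (g u) = p) \<and>
           (\<forall>n. w n \<in> C) \<and>
           block_fixed_point q g w \<and>
           (\<forall>n. x n = c (w n))"
proof -
  note q1 = assms(1) and pq = assms(2) and cop = assms(3)
  obtain Q q0 \<delta> \<tau> where Q: "finite (Q::nat set)" "q0 \<in> Q" "\<forall>s\<in>Q. \<forall>a<p. \<delta> s a \<in> Q"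
    and x: "\<forall>n. x n = \<tau> (foldl \<delta> q0 (rep_pq p q n))"
    using assms(4) unfolding pq_automatic_def by blast
  define M where "M = Suc (Max Q)"
  have MQ: "M \<notin> Q" using Max_ge[OF Q(1)] unfolding M_def by (metis Suc_n_not_le_n)
  define C where "C = insert M Q"
  define W where "W n = (if n = 0 then M else foldl \<delta> q0 (rep_pq p q n))" for n
  define g where "g u = map (\<lambda>j. if u ! (q*j div p) = M then (if j = 0 then M else \<delta> q0 (q*j mod p))
      else \<delta> (u ! (q*j div p)) (q*j mod p)) [0..<p]" for u
  define c where "c s = (if s = M then x 0 else \<tau> s)" for s
  have p0: "p > 0" using pq by simp
  have repset: "set (rep_pq p q n) \<subseteq> {0..<p}" for n
    using rep_props[OF q1 pq cop, of n] by (simp add: valid_def)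
  have WQ: "n > 0 \<Longrightarrow> W n \<in> Q" for n
    unfolding W_def using foldl_closed[OF repset Q(2) Q(3)] by simp
  have WC: "W n \<in> C" for n using WQ[of n] unfolding C_def W_def by auto
  have gC: "set (g u) \<subseteq> C \<and> length (g u) = p" if "set u \<subseteq> C" "length u = q" for u
  proof -
    have "g u ! j \<in> C" if j: "j < p" for j
    proof -
      have "q*j div p < q" using j p0 q1 by (simp add: div_less_iff_less_mult mult.commute)
      hence "u ! (q*j div p) \<in> C" using that \<open>set u \<subseteq> C\<close> \<open>length u = q\<close> by auto
      moreover have "q*j mod p < p" using p0 by simp
      ultimately show ?thesis using j Q(2,3) unfolding g_def C_def by auto
    qed
    moreover have "length (g u) = p" unfolding g_def by simp
    ultimately show ?thesis by (auto simp: in_set_conv_nth)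
  qed
  have key: "g (block q W k) ! j = W (k*p + j)" if j: "j < p" for k j
  proof -
    define i where "i = q*j div p"
    have iq: "i < q" using j p0 q1 unfolding i_def by (simp add: div_less_iff_less_mult mult.commute)
    have bi: "block q W k ! i = W (k*q + i)" using iq unfolding block_def by simp
    have e: "q*(k*p+j) = q*j + (k*q)*p" by (simp add: algebra_simps)
    have d: "q*(k*p+j) div p = k*q + i" unfolding i_def e using p0
      by (simp only: div_mult_self1 [of p] add.commute)
    have m: "q*(k*p+j) mod p = q*j mod p" unfolding e by (simp only: mod_mult_self1)
    have gj: "g (block q W k) ! j = (if W (k*q+i) = M then (if j = 0 then M else \<delta> q0 (q*j mod p))
      else \<delta> (W (k*q+i)) (q*j mod p))" using j bi unfolding g_def i_def by simp
    show ?thesis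
    proof (cases "k*p + j = 0")
      case True
      then have "k = 0" "j = 0" using p0 by auto
      then show ?thesis using gj unfolding W_def i_def by simp
    next
      case False
      then have rs: "rep_pq p q (k*p+j) = rep_pq p q (k*q+i) @ [q*j mod p]"
        using rep_step[OF q1 pq cop, of "k*p+j"] d m by simp
      show ?thesis
      proof (cases "k*q+i = 0")
        case True
        then have "k = 0" using q1 by simp
        then have "j \<noteq> 0" using False by simp
        then show ?thesis using gj True False rs rep0[OF q1 pq cop] \<open>k = 0\<close> unfolding W_def by simp
      next
        case False2: False
        then have "W (k*q+i) \<noteq> M" using WQ[of "k*q+i"] MQ by auto
        have w1: "W (k*p+j) = foldl \<delta> q0 (rep_pq p q (k*p+j))" using False p0 by (auto simp: W_def)
        have w2: "W (k*q+i) = foldl \<delta> q0 (rep_pq p q (k*q+i))" using False2 q1 by (auto simp: W_def)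
        show ?thesis using gj \<open>W (k*q+i) \<noteq> M\<close> rs w1 w2 by simp
      qed
    qed
  qed
  have lens: "\<And>j. length (g (block q W j)) = p"
  proof -
    fix j
    have "set (block q W j) \<subseteq> C" "length (block q W j) = q" using WC unfolding block_def by auto
    then show "length (g (block q W j)) = p" using gC by blast
  qed
  have bfp: "block_fixed_point q g W"
    unfolding block_fixed_point_def
  proof (intro conjI allI)
    fix k
    note cn = concat_nth[of k "\<lambda>j. g (block q W j)" p, OF lens]
    show "let u = concat (map (\<lambda>j. g (block q W j)) [0..<k]) in \<forall>i<length u. W i = u ! i"
      unfolding Let_def
    proof (intro allI impI)
      fix i assume "i < length (concat (map (\<lambda>j. g (block q W j)) [0..<k]))"
      then have i: "i < k * p" using cn by simp
      have "concat (map (\<lambda>j. g (block q W j)) [0..<k]) ! i = W (i div p * p + i mod p)"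
        using cn i key[of "i mod p" "i div p"] p0 by simp
      then show "W i = concat (map (\<lambda>j. g (block q W j)) [0..<k]) ! i" by simp
    qed
  next
    fix N
    have "length (concat (map (\<lambda>j. g (block q W j)) [0..<N])) = N * p"
      using concat_nth[of N "\<lambda>j. g (block q W j)" p, OF lens] by simp
    then show "\<exists>k. N \<le> length (concat (map (\<lambda>j. g (block q W j)) [0..<k]))"
      using p0 by (intro exI[of _ N]) simp
  qed
  have xc: "x n = c (W n)" for n
  proof (cases "n = 0")
    case True then show ?thesis unfolding c_def W_def by simp
  next
    case False
    then have "W n \<noteq> M" using WQ[of n] MQ by auto
    then show ?thesis using x False unfolding c_def W_def by simp
  qed
  have "finite C" unfolding C_def using Q(1) by simp
  show ?thesis
    apply (rule exI[of _ C], rule exI[of _ g], rule exI[of _ W], rule exI[of _ c])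
    using \<open>finite C\<close> gC WC bfp xc by blast
qed

end
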